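(* Let $H$ be a triangle-free graph (possibly with loops) on $n\geq 4$ vertices, let $t\ge 0$ and $c$ be integers with $c\geq 16(nt+n^3)$, let $\Psi$ be a suited $(c+t)$-coloring of $\mathcal{E}_c(H)$, and let $x=\sqrt[4]{(nt+n^3)c^3}$. Then there exists a vertex $v\in V(H)$ such that at least $c-x$ primary colors are $v$-robust (with respect to $\Psi$).
   Context: Graphs have no multiple edges but may have loops; triangle-free means there are no three distinct pairwise adjacent vertices. For integer $c\ge1$, maps $\phi_1,\phi_2:V(H)\to[c]$ are co-proper if $\phi_1(u)\ne\phi_2(v)$ whenever $u\sim v$ in $H$. The exponential graph $\mathcal{E}_c(H)$ has vertex set $[c]^{V(H)}$, with $\phi_1\sim\phi_2$ iff they are co-proper. A proper $(c+t)$-coloring $\Psi:V(\mathcal{E}_c(H))\to[c+t]$ gives adjacent maps different colors; colors $1,\dots,c$ are primary and $c+1,\dots,c+t$ secondary. $\Psi$ is suited if $\Psi(\phi)\in\operatorname{im}(\phi)\cup\{c+1,\dots,c+t\}$ for every $\phi$. Writing $\overline{N}(v)=\{v\}\cup N(v)$ for the closed neighborhood, a primary color $b\in[c]$ is $v$-robust if for every $\phi\in\Psi^{-1}(b)$ there is $w\in\overline{N}(v)$ with $\phi(w)=b$. *)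

theory Defs
  imports Complex_Main
begin

text \<open>Graph H: vertex set is the finite type 'a, adjacency E symmetric (loops allowed).\<close>

definition sym_graph :: "('a \<Rightarrow> 'a \<Rightarrow> bool) \<Rightarrow> bool" where
  "sym_graph E \<longleftrightarrow> (\<forall>u v. E u v \<longrightarrow> E v u)"

definition triangle_free :: "('a \<Rightarrow> 'a \<Rightarrow> bool) \<Rightarrow> bool" where
  "triangle_free E \<longleftrightarrow>
     \<not> (\<exists>u v w. u \<noteq> v \<and> v \<noteq> w \<and> u \<noteq> w \<and> E u v \<and> E v w \<and> E u w)"

text \<open>Vertices of the exponential graph: maps V(H) \<rightarrow> [c].\<close>
definition maps :: "nat \<Rightarrow> ('a \<Rightarrow> nat) set" where
  "maps c = {\<phi>. \<forall>v. \<phi> v \<in> {1..c}}"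

definition co_proper :: "('a \<Rightarrow> 'a \<Rightarrow> bool) \<Rightarrow> ('a \<Rightarrow> nat) \<Rightarrow> ('a \<Rightarrow> nat) \<Rightarrow> bool" where
  "co_proper E \<phi>1 \<phi>2 \<longleftrightarrow> (\<forall>u v. E u v \<longrightarrow> \<phi>1 u \<noteq> \<phi>2 v)"

definition proper_exp_coloring ::
  "('a \<Rightarrow> 'a \<Rightarrow> bool) \<Rightarrow> nat \<Rightarrow> nat \<Rightarrow> (('a \<Rightarrow> nat) \<Rightarrow> nat) \<Rightarrow> bool" where
  "proper_exp_coloring E c t \<Psi> \<longleftrightarrow>
     (\<forall>\<phi>\<in>maps c. \<Psi> \<phi> \<in> {1..c+t}) \<and>
     (\<forall>\<phi>1\<in>maps c. \<forall>\<phi>2\<in>maps c. co_proper E \<phi>1 \<phi>2 \<longrightarrow> \<Psi> \<phi>1 \<noteq> \<Psi> \<phi>2)"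

definition suited :: "nat \<Rightarrow> nat \<Rightarrow> (('a \<Rightarrow> nat) \<Rightarrow> nat) \<Rightarrow> bool" where
  "suited c t \<Psi> \<longleftrightarrow> (\<forall>\<phi>\<in>maps c. \<Psi> \<phi> \<in> range \<phi> \<union> {c+1..c+t})"

definition closed_nbhd :: "('a \<Rightarrow> 'a \<Rightarrow> bool) \<Rightarrow> 'a \<Rightarrow> 'a set" where
  "closed_nbhd E v = {v} \<union> {w. E v w}"

definition robust ::
  "('a \<Rightarrow> 'a \<Rightarrow> bool) \<Rightarrow> nat \<Rightarrow> (('a \<Rightarrow> nat) \<Rightarrow> nat) \<Rightarrow> 'a \<Rightarrow> nat \<Rightarrow> bool" where
  "robust E c \<Psi> v b \<longleftrightarrow> b \<in> {1..c} \<and>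
     (\<forall>\<phi>\<in>maps c. \<Psi> \<phi> = b \<longrightarrow> (\<exists>w\<in>closed_nbhd E v. \<phi> w = b))"

end

theory Submission
  imports Defs "HOL-Library.FuncSet"
begin

lemma count_choice:
  fixes S :: "'a::finite \<Rightarrow> nat set" and g :: "'a \<Rightarrow> nat \<Rightarrow> 'a \<Rightarrow> nat"
  assumes fin: "\<forall>u. finite (S u)" and big: "\<forall>u. card (S u) > card (UNIV::'a set) ^ 3"
  shows "\<exists>f. (\<forall>u. f u \<in> S u) \<and> (\<forall>u u' w. u \<noteq> u' \<longrightarrow> f u' \<noteq> g u (f u) w)"
proof (rule ccontr)
  assume nf: "\<not> ?thesis"
  define N where "N = card (UNIV::'a set) ^ 3"
  define P where "P = PiE UNIV S"
  define Bad where "Bad = (\<lambda>(u,u',w). {f \<in> P. u \<noteq> u' \<and> f u' = g u (f u) w})"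
  have Pmem: "f \<in> P \<longleftrightarrow> (\<forall>u. f u \<in> S u)" for f by (simp add: P_def PiE_iff)
  have finP: "finite P" using fin by (simp add: P_def finite_PiE)
  have ne: "S u \<noteq> {}" for u using big by (metis card.empty not_less0)
  have "(\<lambda>u. SOME x. x \<in> S u) \<in> P" unfolding Pmem using ne by (simp add: some_in_eq)
  then have Pne: "card P > 0" using finP by (metis card_gt_0_iff empty_iff)
  have cover: "P \<subseteq> (\<Union>i\<in>UNIV. Bad i)"
  proof
    fix f assume "f \<in> P"
    then have "\<forall>u. f u \<in> S u" by (simp add: Pmem)
    with nf obtain u u' w where "u \<noteq> u'" "f u' = g u (f u) w" by blast
    then have "f \<in> Bad (u,u',w)" using \<open>f \<in> P\<close> by (simp add: Bad_def)
    then show "f \<in> (\<Union>i\<in>UNIV. Bad i)" by blast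
  qed
  have each: "(N+1) * card (Bad i) \<le> card P" for i
  proof -
    obtain u u' w where i: "i = (u,u',w)" by (metis prod_cases3)
    show ?thesis
    proof (cases "u = u'")
      case True then show ?thesis by (simp add: i Bad_def)
    next
      case False
      let ?h = "\<lambda>(f,a). f(u' := a)"
      have inj: "inj_on ?h (Bad i \<times> S u')"
      proof (rule inj_onI)
        fix p q assume p: "p \<in> Bad i \<times> S u'" and q: "q \<in> Bad i \<times> S u'" and e: "?h p = ?h q"
        obtain f a where pf: "p = (f,a)" by fastforce
        obtain f' a' where qf: "q = (f',a')" by fastforce
        have e2: "f(u' := a) = f'(u' := a')" using e pf qf by simp
        then have aa: "a = a'" by (metis fun_upd_same)
        have oth: "f x = f' x" if "x \<noteq> u'" for x using e2 that by (metis fun_upd_other)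
        have "f u' = g u (f u) w" using p pf by (simp add: i Bad_def)
        moreover have "f' u' = g u (f' u) w" using q qf by (simp add: i Bad_def)
        ultimately have "f u' = f' u'" using oth False by simp
        then have "f = f'" using oth by (metis ext)
        then show "p = q" using pf qf aa by simp
      qed
      have sub: "?h ` (Bad i \<times> S u') \<subseteq> P"
      proof
        fix y assume "y \<in> ?h ` (Bad i \<times> S u')"
        then obtain f a where "f \<in> Bad i" "a \<in> S u'" "y = f(u' := a)" by auto
        then show "y \<in> P" by (auto simp: Pmem i Bad_def)
      qed
      have "card (Bad i \<times> S u') \<le> card P" using card_inj_on_le[OF inj sub finP] .
      then have "card (Bad i) * card (S u') \<le> card P" by (simp add: card_cartesian_product)
      moreover have "N + 1 \<le> card (S u')" using big N_def by (simp add: Suc_le_eq)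
      ultimately show ?thesis
        by (metis le_trans mult.commute mult_le_mono1)
    qed
  qed
  have "card P \<le> card (\<Union>i\<in>UNIV. Bad i)"
  proof (rule card_mono[OF _ cover])
    have "Bad i \<subseteq> P" for i by (cases i) (auto simp: Bad_def)
    then show "finite (\<Union>i\<in>UNIV. Bad i)" using finP by (meson finite_UN_I finite_UNIV rev_finite_subset)
  qed
  also have "\<dots> \<le> (\<Sum>i\<in>UNIV. card (Bad i))" by (rule card_UN_le) simp
  finally have c1: "(N+1) * card P \<le> (N+1) * (\<Sum>i\<in>(UNIV::('a\<times>'a\<times>'a) set). card (Bad i))" by (rule mult_le_mono2)
  also have "\<dots> = (\<Sum>i\<in>(UNIV::('a\<times>'a\<times>'a) set). (N+1) * card (Bad i))" by (simp add: sum_distrib_left)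
  also have "\<dots> \<le> (\<Sum>i\<in>(UNIV::('a\<times>'a\<times>'a) set). card P)" by (rule sum_mono) (rule each)
  also have "\<dots> = N * card P" by (simp add: N_def power3_eq_cube UNIV_Times_UNIV[symmetric] del: UNIV_Times_UNIV)
  finally show False using Pne by simp
qed

theorem lemma5:
  fixes E :: "'a::finite \<Rightarrow> 'a \<Rightarrow> bool"
    and n c t :: nat and \<Psi> :: "('a \<Rightarrow> nat) \<Rightarrow> nat"
  assumes "sym_graph E" and "triangle_free E"
    and "card (UNIV :: 'a set) = n" and "n \<ge> 4"
    and "real c \<ge> 16 * (real n * real t + real n ^ 3)"
    and "proper_exp_coloring E c t \<Psi>" and "suited c t \<Psi>"
  shows "\<exists>v. real (card {b. robust E c \<Psi> v b})
             \<ge> real c - root 4 ((real n * real t + real n ^ 3) * real c ^ 3)"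
proof (rule ccontr)
  assume H: "\<not> ?thesis"
  define A where "A = real n * real t + real n ^ 3"
  define x where "x = root 4 (A * real c ^ 3)"
  have A0: "A \<ge> 0" by (simp add: A_def)
  have "16 * A \<le> real c" using assms(5) unfolding A_def .
  then have cA: "real c \<ge> A" using A0 by linarith
  have "A ^ 4 \<le> A * real c ^ 3"
  proof -
    have "A ^ 3 \<le> real c ^ 3" using cA A0 by (rule power_mono)
    then have "A * A ^ 3 \<le> A * real c ^ 3" using A0 by (rule mult_left_mono)
    then show ?thesis by (simp add: power_Suc[symmetric] del: power_Suc)
  qed
  then have "root 4 (A ^ 4) \<le> x" unfolding x_def by simp
  then have xA: "A \<le> x" using A0 by (simp add: real_root_power_cancel)
  define NR where "NR v = {b \<in> {1..c}. \<not> robust E c \<Psi> v b}" for v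
  have NRbig: "card (NR v) > n*t + n^3" for v
  proof -
    define R where "R = {b. robust E c \<Psi> v b}"
    have Rs: "R \<subseteq> {1..c}" by (auto simp: R_def robust_def)
    have "NR v = {1..c} - R" by (auto simp: NR_def R_def robust_def)
    then have "card (NR v) = c - card R" using Rs by (simp add: card_Diff_subset finite_subset)
    moreover have "card R \<le> c" using Rs by (metis card_atLeastAtMost card_mono finite_atLeastAtMost diff_Suc_1)
    moreover have "real (card R) < real c - x" using H unfolding R_def x_def A_def by (meson not_le)
    ultimately have "real (card (NR v)) > A" using xA by (simp add: of_nat_diff)
    then show ?thesis unfolding A_def by (metis of_nat_add of_nat_less_iff of_nat_mult of_nat_power)
  qed
  define W where "W v b = (SOME \<phi>. \<phi> \<in> maps c \<and> \<Psi> \<phi> = b \<and> (\<forall>w\<in>closed_nbhd E v. \<phi> w \<noteq> b))" for v b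
  have wit: "W v b \<in> maps c \<and> \<Psi> (W v b) = b \<and> (\<forall>w\<in>closed_nbhd E v. W v b w \<noteq> b)" if "b \<in> NR v" for v b
  proof -
    have "\<exists>\<phi>. \<phi> \<in> maps c \<and> \<Psi> \<phi> = b \<and> (\<forall>w\<in>closed_nbhd E v. \<phi> w \<noteq> b)"
      using that by (auto simp: NR_def robust_def)
    then show ?thesis unfolding W_def by (rule someI_ex)
  qed
  define good where "good \<psi> \<longleftrightarrow> \<psi> \<in> maps c \<and> \<Psi> \<psi> \<in> {c+1..c+t}" for \<psi>
  have propc: "\<forall>\<phi>1\<in>maps c. \<forall>\<phi>2\<in>maps c. co_proper E \<phi>1 \<phi>2 \<longrightarrow> \<Psi> \<phi>1 \<noteq> \<Psi> \<phi>2"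
    using assms(6) by (simp add: proper_exp_coloring_def)
  have key: "\<exists>\<psi>. (\<forall>u. \<psi> u \<in> NR u - U) \<and> good \<psi>" if U: "finite U" "card U \<le> n*t" for U
  proof -
    define S where "S u = NR u - U" for u
    have finS: "\<forall>u. finite (S u)" by (simp add: S_def NR_def)
    have bigS: "\<forall>u. card (S u) > card (UNIV::'a set) ^ 3"
    proof
      fix u
      have "card (NR u) - card U \<le> card (S u)" unfolding S_def by (rule diff_card_le_card_Diff) (rule U(1))
      then show "card (S u) > card (UNIV::'a set) ^ 3" using NRbig[of u] U(2) assms(3) by simp
    qed
    obtain \<psi> where ps: "\<forall>u. \<psi> u \<in> S u" and pa: "\<forall>u u' w. u \<noteq> u' \<longrightarrow> \<psi> u' \<noteq> W u (\<psi> u) w"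
      using count_choice[OF finS bigS, of W] by blast
    have inNR: "\<psi> u \<in> NR u" for u using ps by (simp add: S_def)
    have pm: "\<psi> \<in> maps c" using inNR by (auto simp: maps_def NR_def)
    have "\<Psi> \<psi> \<in> range \<psi> \<union> {c+1..c+t}" using assms(7) pm by (simp add: suited_def)
    moreover have "\<Psi> \<psi> \<notin> range \<psi>"
    proof
      assume "\<Psi> \<psi> \<in> range \<psi>"
      then obtain u where eq: "\<Psi> \<psi> = \<psi> u" by auto
      define \<phi> where "\<phi> = W u (\<psi> u)"
      have w: "\<phi> \<in> maps c" "\<Psi> \<phi> = \<psi> u" "\<forall>w\<in>closed_nbhd E u. \<phi> w \<noteq> \<psi> u"
        using wit[OF inNR[of u]] by (auto simp: \<phi>_def)
      have "co_proper E \<psi> \<phi>"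
        unfolding co_proper_def
      proof (intro allI impI)
        fix u1 w assume e: "E u1 w"
        show "\<psi> u1 \<noteq> \<phi> w"
        proof (cases "u1 = u")
          case True
          then have "w \<in> closed_nbhd E u" using e by (simp add: closed_nbhd_def)
          then show ?thesis using w(3) True by auto
        next
          case False
          then show ?thesis using pa \<phi>_def by metis
        qed
      qed
      then have "\<Psi> \<psi> \<noteq> \<Psi> \<phi>" using propc pm w(1) by blast
      then show False using eq w(2) by simp
    qed
    ultimately have "good \<psi>" using pm by (auto simp: good_def)
    then show ?thesis using ps S_def by blast
  qed
  have fam: "\<exists>F. (\<forall>i<k. good (F i)) \<and> (\<forall>i<k. \<forall>j<k. i \<noteq> j \<longrightarrow> range (F i) \<inter> range (F j) = {})"
    if "k \<le> t+1" for k
    using that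
  proof (induction k)
    case 0
    then show ?case by simp
  next
    case (Suc k)
    then obtain F where F1: "\<forall>i<k. good (F i)"
      and F2: "\<forall>i<k. \<forall>j<k. i \<noteq> j \<longrightarrow> range (F i) \<inter> range (F j) = {}" by auto
    define U where "U = (\<Union>i<k. range (F i))"
    have finU: "finite U" by (simp add: U_def)
    have "card U \<le> (\<Sum>i<k. card (range (F i)))" unfolding U_def by (rule card_UN_le) simp
    also have "\<dots> \<le> (\<Sum>i<k. n)"
      by (rule sum_mono) (metis assms(3) card_image_le finite)
    also have "\<dots> = k * n" by simp
    also have "\<dots> \<le> n * t" using Suc.prems by simp
    finally obtain \<psi> where p1: "\<forall>u. \<psi> u \<in> NR u - U" and p2: "good \<psi>" using key finU by blast
    have disj: "range \<psi> \<inter> range (F j) = {}" if "j < k" for j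
      using p1 that by (auto simp: U_def)
    define G where "G = F(k := \<psi>)"
    have "\<forall>i<Suc k. good (G i)" using F1 p2 by (simp add: G_def less_Suc_eq)
    moreover have "\<forall>i<Suc k. \<forall>j<Suc k. i \<noteq> j \<longrightarrow> range (G i) \<inter> range (G j) = {}"
      using F2 disj by (simp add: G_def less_Suc_eq) (metis Int_commute)
    ultimately show ?case by blast
  qed
  obtain F where F1: "\<forall>i<t+1. good (F i)"
      and F2: "\<forall>i<t+1. \<forall>j<t+1. i \<noteq> j \<longrightarrow> range (F i) \<inter> range (F j) = {}"
    using fam[of "t+1"] by auto
  have inj: "inj_on (\<lambda>i. \<Psi> (F i)) {..<t+1}"
  proof (rule inj_onI)
    fix i j assume i: "i \<in> {..<t+1}" and j: "j \<in> {..<t+1}" and e: "\<Psi> (F i) = \<Psi> (F j)"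
    show "i = j"
    proof (rule ccontr)
      assume "i \<noteq> j"
      then have d: "range (F i) \<inter> range (F j) = {}" using F2 i j by auto
      have "co_proper E (F i) (F j)" unfolding co_proper_def
      proof (intro allI impI)
        fix u w
        show "F i u \<noteq> F j w" using d by (metis disjoint_iff rangeI)
      qed
      moreover have "F i \<in> maps c" "F j \<in> maps c" using F1 i j by (auto simp: good_def)
      ultimately show False using propc e by blast
    qed
  qed
  have "(\<lambda>i. \<Psi> (F i)) ` {..<t+1} \<subseteq> {c+1..c+t}" using F1 by (auto simp: good_def)
  from card_inj_on_le[OF inj this] show False by simp
qed

end
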